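(* Let $p$ be a prime, $\mathbb{C}_p$ the field of complex $p$-adic numbers with norm $|\cdot|_p$, $a,b,c\in\mathbb{C}_p$ with $b\neq0$, $c\neq ab$, and $f(x)=\frac{x+a}{bx+c}$ for $x\neq -c/b$. Fix a square root $\sqrt{(c-1)^2+4ab}\in\mathbb{C}_p$ and let $x_{1}=\frac{1-c+\sqrt{(c-1)^2+4ab}}{2b}$, $x_2=\frac{1-c-\sqrt{(c-1)^2+4ab}}{2b}$ (the fixed points of $f$). Assume $$\left|\frac{c-ab}{(bx_i+c)^2}\right|_p=1\ (i=1,2)\qquad\text{and}\qquad \left|\frac{b}{\sqrt{c-ab}}\right|_p<1,$$ and put $\varepsilon_c=\left|\frac{\sqrt{c-ab}}{b}\right|_p-1$. Then: (i) if $\left|\frac{\sqrt{(c-1)^2+4ab}}{b}\right|_p\ge 1+\varepsilon_c$, then $SI(x_1)\cap SI(x_2)=\emptyset$; (ii) otherwise $SI(x_1)=SI(x_2)$.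
   Context: For $x_0\in\mathbb{C}_p$ and $r>0$: $V_r(x_0)=\{x:|x-x_0|_p<r\}$ and $S_r(x_0)=\{x:|x-x_0|_p=r\}$. For a fixed point $x_0$ of $f$, a ball $V_r(x_0)$ (contained in the domain of $f$) is a Siegel disk if every sphere $S_\rho(x_0)$ with $\rho<r$ is invariant, i.e. for every $x\in S_\rho(x_0)$ all iterates $f^n(x)$ are defined and lie in $S_\rho(x_0)$. The maximum Siegel disk $SI(x_0)$ is the union of all Siegel disks centered at $x_0$. *)

theory Defs
  imports "HOL-Analysis.Analysis" "HOL-Computational_Algebra.Polynomial"
begin

text \<open>Axiomatic characterisation of the complex p-adic numbers C_p: a field of characteristic 0
with a non-archimedean absolute value nrm, normalised by nrm p = 1/p, algebraically closed,
complete, and in which the algebraic numbers (roots of nonzero rational polynomials) are dense.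
These properties determine (C_p, |.|_p) up to isometric isomorphism.\<close>

definition is_Cp :: "nat \<Rightarrow> ('a::field_char_0 \<Rightarrow> real) \<Rightarrow> bool" where
  "is_Cp p nrm \<longleftrightarrow>
     (\<forall>x. nrm x \<ge> 0 \<and> (nrm x = 0 \<longleftrightarrow> x = 0)) \<and>
     (\<forall>x y. nrm (x * y) = nrm x * nrm y) \<and>
     (\<forall>x y. nrm (x + y) \<le> max (nrm x) (nrm y)) \<and>
     nrm (of_nat p) = 1 / real p \<and>
     (\<forall>q :: 'a poly. degree q > 0 \<longrightarrow> (\<exists>x. poly q x = 0)) \<and>
     (\<forall>X :: nat \<Rightarrow> 'a.
        (\<forall>e>0. \<exists>N. \<forall>m\<ge>N. \<forall>n\<ge>N. nrm (X m - X n) < e) \<longrightarrow>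
        (\<exists>L. \<forall>e>0. \<exists>N. \<forall>n\<ge>N. nrm (X n - L) < e)) \<and>
     (\<forall>x. \<forall>e>0. \<exists>y. (\<exists>q :: rat poly. q \<noteq> 0 \<and> poly (map_poly of_rat q) y = 0)
                     \<and> nrm (x - y) < e)"

definition mob :: "'a::field \<Rightarrow> 'a \<Rightarrow> 'a \<Rightarrow> 'a \<Rightarrow> 'a" where
  "mob a b c x = (x + a) / (b * x + c)"

definition Vball :: "('a::ab_group_add \<Rightarrow> real) \<Rightarrow> 'a \<Rightarrow> real \<Rightarrow> 'a set" where
  "Vball nrm x0 r = {x. nrm (x - x0) < r}"

definition Ssphere :: "('a::ab_group_add \<Rightarrow> real) \<Rightarrow> 'a \<Rightarrow> real \<Rightarrow> 'a set" where
  "Ssphere nrm x0 r = {x. nrm (x - x0) = r}"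

definition siegel_disk :: "('a::field \<Rightarrow> real) \<Rightarrow> 'a \<Rightarrow> 'a \<Rightarrow> 'a \<Rightarrow> 'a \<Rightarrow> real \<Rightarrow> bool" where
  "siegel_disk nrm a b c x0 r \<longleftrightarrow>
     r > 0 \<and> (\<forall>x\<in>Vball nrm x0 r. b * x + c \<noteq> 0) \<and>
     (\<forall>\<rho>. 0 < \<rho> \<and> \<rho> < r \<longrightarrow>
        (\<forall>x\<in>Ssphere nrm x0 \<rho>. \<forall>n.
            b * ((mob a b c) ^^ n) x + c \<noteq> 0 \<and> ((mob a b c) ^^ n) x \<in> Ssphere nrm x0 \<rho>))"

definition SI :: "('a::field \<Rightarrow> real) \<Rightarrow> 'a \<Rightarrow> 'a \<Rightarrow> 'a \<Rightarrow> 'a \<Rightarrow> 'a set" where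
  "SI nrm a b c x0 = \<Union>{Vball nrm x0 r | r. siegel_disk nrm a b c x0 r}"

end

theory Submission
  imports Defs
begin

locale nv =
  fixes nrm :: "'a::field_char_0 \<Rightarrow> real"
  assumes N0: "\<And>x. nrm x \<ge> 0" and Nz: "\<And>x. nrm x = 0 \<longleftrightarrow> x = 0"
    and Nm: "\<And>x y. nrm (x * y) = nrm x * nrm y"
    and Nx: "\<And>x y. nrm (x + y) \<le> max (nrm x) (nrm y)"
begin

lemma n1: "nrm 1 = 1"
proof -
  have "nrm 1 = nrm 1 * nrm 1" using Nm[of 1 1] by simp
  moreover have "nrm 1 \<noteq> 0" using Nz by simp
  ultimately show ?thesis by (metis mult_cancel_right1)
qed

lemma nminus: "nrm (- x) = nrm x"
proof -
  have "nrm (-1) * nrm (-1) = 1" using Nm[of "-1" "-1"] n1 by simp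
  hence "nrm (-1) = 1" using N0[of "-1"]
    by (metis abs_of_nonneg abs_square_eq_1 power2_eq_square)
  thus ?thesis using Nm[of "-1" x] by simp
qed

lemma nsym: "nrm (x - y) = nrm (y - x)"
  using nminus[of "x - y"] by simp

lemma ndiv: "nrm (x / y) = nrm x / nrm y"
proof (cases "y = 0")
  case True thus ?thesis using Nz[of 0] by simp
next
  case False
  have "x = (x / y) * y" using False by simp
  hence "nrm x = nrm (x/y) * nrm y" by (metis Nm)
  moreover have "nrm y \<noteq> 0" using False Nz by simp
  ultimately show ?thesis by simp
qed

lemma ultra: assumes "nrm u < nrm v" shows "nrm (u + v) = nrm v"
proof -
  have "nrm (u + v) \<le> nrm v" using Nx[of u v] assms by simp
  moreover have "nrm v \<le> max (nrm (u + v)) (nrm (- u))" using Nx[of "u+v" "-u"] by simp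
  ultimately show ?thesis using assms nminus[of u] by (auto simp: max_def split: if_splits)
qed

lemma npos: "nrm x = T \<Longrightarrow> T > 0 \<Longrightarrow> x \<noteq> 0"
  using Nz[of 0] by auto

lemma ntri: "nrm (x - z) \<le> max (nrm (x - y)) (nrm (y - z))"
  using Nx[of "x - y" "y - z"] by simp

lemma mob_diff:
  assumes "b*y+c \<noteq> 0" "b*x0+c \<noteq> 0" "x0*(b*x0+c) = x0+a"
  shows "mob a b c y - x0 = (c - a*b)*(y - x0)/((b*y+c)*(b*x0+c))"
proof -
  have "x0 = (x0+a)/(b*x0+c)" using assms by (simp add: field_simps)
  hence "mob a b c y - x0 = (y+a)/(b*y+c) - (x0+a)/(b*x0+c)" unfolding mob_def by simp
  also have "\<dots> = ((y+a)*(b*x0+c) - (x0+a)*(b*y+c))/((b*y+c)*(b*x0+c))"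
    using assms by (simp add: field_simps)
  also have "(y+a)*(b*x0+c) - (x0+a)*(b*y+c) = (c - a*b)*(y - x0)"
    by (simp add: algebra_simps)
  finally show ?thesis .
qed

lemma SI_ball:
  assumes b: "b \<noteq> 0" and fx: "x0*(b*x0+c) = x0+a"
    and T: "nrm (b*x0+c) = T" and T2: "nrm (c - a*b) = T*T" and Tp: "T > 0"
  shows "SI nrm a b c x0 = Vball nrm x0 (T / nrm b)"
proof -
  define R where "R = T / nrm b"
  have B: "nrm b > 0" using b N0[of b] Nz[of b] by simp
  have Rp: "R > 0" using B Tp R_def by simp
  have nz0: "b*x0+c \<noteq> 0" using npos[OF T Tp] .
  have dom: "nrm (b*y+c) = T" if "nrm (y - x0) < R" for y
  proof -
    have "nrm b * nrm (y-x0) < T" using that B by (simp add: R_def field_simps)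
    hence "nrm (b*(y-x0)) < T" by (simp only: Nm)
    hence "nrm (b*(y-x0) + (b*x0+c)) = T" using ultra T by simp
    moreover have "b*(y-x0) + (b*x0+c) = b*y+c" by (simp add: algebra_simps)
    ultimately show ?thesis by simp
  qed
  have step: "nrm (mob a b c y - x0) = nrm (y - x0)" if "nrm (y - x0) < R" for y
  proof -
    have d: "nrm (b*y+c) = T" using dom that .
    hence "b*y+c \<noteq> 0" using Tp npos by blast
    hence "mob a b c y - x0 = (c - a*b)*(y - x0)/((b*y+c)*(b*x0+c))"
      using mob_diff nz0 fx by blast
    hence "nrm (mob a b c y - x0) = T*T*nrm (y-x0)/(T*T)"
      by (simp add: ndiv Nm d T T2)
    thus ?thesis using Tp by simp
  qed
  have good: "siegel_disk nrm a b c x0 r" if "0 < r" "r \<le> R" for r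
    unfolding siegel_disk_def
  proof (intro conjI ballI allI impI)
    show "0 < r" by fact
    fix x assume "x \<in> Vball nrm x0 r"
    hence "nrm (x - x0) < R" using that unfolding Vball_def by simp
    thus "b*x+c \<noteq> 0" using dom Tp npos by blast
  next
    fix \<rho> x n assume rr: "0 < \<rho> \<and> \<rho> < r" and xs: "x \<in> Ssphere nrm x0 \<rho>"
    have "((mob a b c) ^^ n) x \<in> Ssphere nrm x0 \<rho>"
    proof (induction n)
      case 0 thus ?case using xs by simp
    next
      case (Suc n)
      hence "nrm (((mob a b c) ^^ n) x - x0) = \<rho>" unfolding Ssphere_def by simp
      hence "nrm (((mob a b c) ^^ n) x - x0) < R" using rr that by simp
      from step[OF this] show ?case using Suc unfolding Ssphere_def by simp
    qed
    moreover have "nrm (((mob a b c) ^^ n) x - x0) < R"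
      using calculation rr that unfolding Ssphere_def by simp
    hence "nrm (b * ((mob a b c) ^^ n) x + c) = T" by (rule dom)
    ultimately show "b * ((mob a b c) ^^ n) x + c \<noteq> 0"
      "((mob a b c) ^^ n) x \<in> Ssphere nrm x0 \<rho>" using Tp npos by blast+
  qed
  have bad: "r \<le> R" if "siegel_disk nrm a b c x0 r" for r
  proof (rule ccontr)
    assume "\<not> r \<le> R"
    have "-c/b - x0 = -(b*x0+c)/b" using b by (simp add: field_simps)
    hence "nrm (-c/b - x0) = nrm (-(b*x0+c)) / nrm b" by (simp only: ndiv)
    hence "nrm (-c/b - x0) = R" by (simp only: nminus T R_def)
    hence "-c/b \<in> Vball nrm x0 r" using \<open>\<not> r \<le> R\<close> unfolding Vball_def by simp
    hence "b*(-c/b) + c \<noteq> 0" using that unfolding siegel_disk_def by blast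
    thus False using b by simp
  qed
  have "SI nrm a b c x0 = Vball nrm x0 R"
  proof
    show "SI nrm a b c x0 \<subseteq> Vball nrm x0 R"
      unfolding SI_def using bad by (fastforce simp: Vball_def)
    show "Vball nrm x0 R \<subseteq> SI nrm a b c x0"
      unfolding SI_def using good[OF Rp order_refl] by blast
  qed
  thus ?thesis using R_def by simp
qed

end

theorem theorem3p3:
  fixes p :: nat and nrm :: "'a::field_char_0 \<Rightarrow> real"
    and a b c s t x1 x2 :: 'a and eps :: real
  assumes "prime p" and "is_Cp p nrm"
    and "b \<noteq> 0" and "c \<noteq> a * b"
    and s: "s ^ 2 = (c - 1) ^ 2 + 4 * a * b"
    and t: "t ^ 2 = c - a * b"
    and x1: "x1 = (1 - c + s) / (2 * b)"
    and x2: "x2 = (1 - c - s) / (2 * b)"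
    and h1: "nrm ((c - a * b) / (b * x1 + c) ^ 2) = 1"
    and h2: "nrm ((c - a * b) / (b * x2 + c) ^ 2) = 1"
    and h3: "nrm (b / t) < 1"
    and eps: "eps = nrm (t / b) - 1"
  shows "(nrm (s / b) \<ge> 1 + eps \<longrightarrow> SI nrm a b c x1 \<inter> SI nrm a b c x2 = {})
       \<and> (\<not> nrm (s / b) \<ge> 1 + eps \<longrightarrow> SI nrm a b c x1 = SI nrm a b c x2)"
proof -
  interpret nv nrm
    using assms(2) unfolding is_Cp_def by unfold_locales auto
  have b: "b \<noteq> 0" by fact
  have tnz: "t \<noteq> 0" using t assms(4) by auto
  have Tp: "nrm t > 0" using tnz N0[of t] Nz[of t] by simp
  have T2: "nrm (c - a*b) = nrm t * nrm t" using t by (metis Nm power2_eq_square)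
  have fix1: "x1*(b*x1+c) = x1+a"
  proof -
    have "b*x1*x1 + (c-1)*x1 - a = ((1-c+s)*(s-(1-c)) - 4*a*b)/(4*b)"
      unfolding x1 using b by (simp add: field_simps power2_eq_square)
    also have "(1-c+s)*(s-(1-c)) = s^2 - (c-1)^2" by (simp add: algebra_simps power2_eq_square)
    finally have "b*x1*x1 + (c-1)*x1 - a = 0" using s by simp
    thus ?thesis by (simp add: algebra_simps)
  qed
  have fix2: "x2*(b*x2+c) = x2+a"
  proof -
    have "b*x2*x2 + (c-1)*x2 - a = ((1-c-s)*(-s-(1-c)) - 4*a*b)/(4*b)"
      unfolding x2 using b by (simp add: field_simps power2_eq_square)
    also have "(1-c-s)*(-s-(1-c)) = s^2 - (c-1)^2" by (simp add: algebra_simps power2_eq_square)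
    finally have "b*x2*x2 + (c-1)*x2 - a = 0" using s by simp
    thus ?thesis by (simp add: algebra_simps)
  qed
  have Tx: "nrm (b*x+c) = nrm t" if h: "nrm ((c - a * b) / (b * x + c) ^ 2) = 1" for x
  proof -
    have "b*x+c \<noteq> 0" using h Nz[of 0] by auto
    hence "nrm (b*x+c) * nrm (b*x+c) = nrm t * nrm t"
      using h T2 Nz[of "b*x+c"] by (simp add: ndiv Nm power2_eq_square)
    thus ?thesis using N0[of "b*x+c"] N0[of t]
      by (metis abs_of_nonneg power2_eq_square real_sqrt_abs)
  qed
  define R where "R = nrm t / nrm b"
  have S1: "SI nrm a b c x1 = Vball nrm x1 R"
    using SI_ball[OF b fix1 Tx[OF h1] T2 Tp] R_def by simp
  have S2: "SI nrm a b c x2 = Vball nrm x2 R"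
    using SI_ball[OF b fix2 Tx[OF h2] T2 Tp] R_def by simp
  have Re: "1 + eps = R" using eps R_def by (simp add: ndiv)
  have d: "x1 - x2 = s / b" unfolding x1 x2 using b by (simp add: field_simps)
  show ?thesis
  proof (intro conjI impI)
    assume "1 + eps \<le> nrm (s / b)"
    hence ge: "R \<le> nrm (x1 - x2)" using Re d by simp
    show "SI nrm a b c x1 \<inter> SI nrm a b c x2 = {}"
    proof (rule ccontr)
      assume "SI nrm a b c x1 \<inter> SI nrm a b c x2 \<noteq> {}"
      then obtain z where "nrm (z - x1) < R" "nrm (z - x2) < R"
        unfolding S1 S2 Vball_def by blast
      moreover have "nrm (x1 - x2) \<le> max (nrm (x1 - z)) (nrm (z - x2))" by (rule ntri)
      ultimately show False using ge nsym[of x1 z] by simp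
    qed
  next
    assume "\<not> 1 + eps \<le> nrm (s / b)"
    hence lt: "nrm (x1 - x2) < R" using Re d by simp
    have "nrm (z - x2) < R" if "nrm (z - x1) < R" for z
      using ntri[of z x2 x1] that lt by simp
    moreover have "nrm (z - x1) < R" if "nrm (z - x2) < R" for z
      using ntri[of z x1 x2] that lt nsym[of x1 x2] by simp
    ultimately show "SI nrm a b c x1 = SI nrm a b c x2"
      unfolding S1 S2 Vball_def by blast
  qed
qed

end
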